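(* Let $\phi$ be a function from $\mathbb{Z}^d$ to $[0,+\infty)$ such that $\sum_{y\in\mathbb{Z}^d}\phi(y)^2=N$. For any $N\ge1$ and any $\alpha\in(0,1)$, $$P(f_N=\phi)\le\frac{\phi(0)}{\alpha}\exp\Big(-\frac12\mathcal{E}(\phi)+\alpha\sqrt{N|\mathrm{supp}\,\phi|}\Big).$$
   Context: $P$ is the law of the simple random walk $(S_k)$ on $\mathbb{Z}^d$ started at $0$; $L_N(x)=\sum_{k=0}^{N-1}1_{\{S_k=x\}}$ and $f_N=\sqrt{L_N}$. $\mathcal{E}(f)=\frac1{2d}\sum_{y,z\in\mathbb{Z}^d,|y-z|=1}(f(y)-f(z))^2$ (ordered pairs). $\mathrm{supp}\,\phi=\{y:\phi(y)\ne0\}$ and $|\cdot|$ denotes cardinality. *)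

theory Defs
  imports "HOL-Analysis.Analysis"
begin

text \<open>Points of Z^d are vectors of type int ^ 'd, with d = CARD('d).\<close>

definition sqnorm :: "int ^ 'd \<Rightarrow> int" where
  "sqnorm v = (\<Sum>i\<in>UNIV. (v $ i)^2)"

definition adjacent :: "int ^ 'd \<Rightarrow> int ^ 'd \<Rightarrow> bool" where
  "adjacent y z \<longleftrightarrow> sqnorm (y - z) = 1"

definition unit_steps :: "(int ^ 'd) set" where
  "unit_steps = {e. sqnorm e = 1}"

text \<open>Step sequences of length n; under P they are uniformly distributed.\<close>
definition step_seqs :: "nat \<Rightarrow> (int ^ 'd) list set" where
  "step_seqs n = {xs. length xs = n \<and> set xs \<subseteq> unit_steps}"

definition walk_pos :: "(int ^ 'd) list \<Rightarrow> nat \<Rightarrow> int ^ 'd" where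
  "walk_pos xs k = sum_list (take k xs)"

definition local_time :: "nat \<Rightarrow> (int ^ 'd) list \<Rightarrow> int ^ 'd \<Rightarrow> nat" where
  "local_time N xs x = card {k. k < N \<and> walk_pos xs k = x}"

text \<open>P(f_N = phi), where f_N = sqrt L_N. Only S_0..S_{N-1} matter, i.e. the
  first N-1 increments, which are uniform on unit_steps^(N-1).\<close>
definition prob_fN_eq :: "nat \<Rightarrow> (int ^ 'd \<Rightarrow> real) \<Rightarrow> real" where
  "prob_fN_eq N \<phi> =
     real (card {xs \<in> step_seqs (N - 1). \<forall>x. sqrt (real (local_time N xs x)) = \<phi> x})
     / real (card (unit_steps :: (int ^ 'd) set)) ^ (N - 1)"

text \<open>Dirichlet energy, sum over ordered pairs of neighbours.\<close>
definition dirichlet_energy :: "(int ^ 'd \<Rightarrow> real) \<Rightarrow> real" where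
  "dirichlet_energy f = (1 / (2 * real CARD('d))) *
     infsum (\<lambda>(y, z). (f y - f z)^2) {(y, z). adjacent y z}"

definition supp :: "(int ^ 'd \<Rightarrow> real) \<Rightarrow> (int ^ 'd) set" where
  "supp \<phi> = {y. \<phi> y \<noteq> 0}"

end

theory Submission
  imports Defs
begin


lemma sqnorm_neg: "sqnorm (- v) = sqnorm v"
  unfolding sqnorm_def by simp

definition ustep :: "'d \<Rightarrow> int \<Rightarrow> int ^ 'd" where
  "ustep i s = (\<chi> j. if j = i then s else 0)"

lemma sqnorm_ustep: "sqnorm (ustep i s) = s^2"
proof -
  have "sqnorm (ustep i s) = (\<Sum>j\<in>UNIV. if j = i then s^2 else 0)"
    unfolding sqnorm_def ustep_def by (intro sum.cong) auto
  thus ?thesis by simp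
qed

lemma unit_steps_eq: "(unit_steps :: (int^'d) set) = (\<lambda>(i,s). ustep i s) ` (UNIV \<times> {1, -1})"
proof
  show "(\<lambda>(i,s). ustep i s) ` (UNIV \<times> {1, -1}) \<subseteq> (unit_steps :: (int^'d) set)"
    by (auto simp: unit_steps_def sqnorm_ustep)
next
  show "(unit_steps :: (int^'d) set) \<subseteq> (\<lambda>(i,s). ustep i s) ` (UNIV \<times> {1, -1})"
  proof
    fix e :: "int^'d" assume "e \<in> unit_steps"
    hence e1: "(\<Sum>j\<in>UNIV. (e$j)^2) = 1" by (simp add: unit_steps_def sqnorm_def)
    have "\<exists>i. e$i \<noteq> 0"
    proof (rule ccontr)
      assume "\<not> ?thesis" hence "(\<Sum>j\<in>UNIV. (e$j)^2) = 0" by simp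
      with e1 show False by simp
    qed
    then obtain i where i: "e$i \<noteq> 0" by blast
    have split: "(\<Sum>j\<in>UNIV. (e$j)^2) = (e$i)^2 + (\<Sum>j\<in>UNIV-{i}. (e$j)^2)"
      by (simp add: sum.remove)
    have ge: "(e$i)^2 \<ge> 1" using i by (smt (verit) power2_less_eq_zero_iff zero_le_power2 pos2 power2_eq_square mult_le_cancel_right1 int_one_le_iff_zero_less zero_less_mult_iff)
    have nn: "(\<Sum>j\<in>UNIV-{i}. (e$j)^2) \<ge> 0" by (simp add: sum_nonneg)
    have ei: "(e$i)^2 = 1" and rest: "(\<Sum>j\<in>UNIV-{i}. (e$j)^2) = 0" using split e1 ge nn by linarith+
    have "\<forall>j\<in>UNIV-{i}. (e$j)^2 = 0"
      using rest by (subst (asm) sum_nonneg_eq_0_iff) auto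
    hence z: "\<And>j. j \<noteq> i \<Longrightarrow> e$j = 0" by auto
    from ei have "e$i = 1 \<or> e$i = -1" by (simp add: power2_eq_1_iff)
    hence "e = ustep i (e$i)" using z by (auto simp: ustep_def vec_eq_iff)
    thus "e \<in> (\<lambda>(i,s). ustep i s) ` (UNIV \<times> {1, -1})"
      using \<open>e$i = 1 \<or> e$i = -1\<close> by force
  qed
qed

lemma inj_ustep: "inj_on (\<lambda>(i,s). ustep i s) (UNIV \<times> {1::int, -1})"
proof (rule inj_onI, clarify)
  fix i s j t assume *: "ustep i s = ustep j t" "s \<in> {1::int,-1}" "t \<in> {1::int,-1}"
  hence "ustep i s $ i = ustep j t $ i" "ustep i s $ j = ustep j t $ j" by auto
  thus "i = j \<and> s = t" using * by (auto simp: ustep_def split: if_splits)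
qed

lemma finite_unit_steps: "finite (unit_steps :: (int^'d) set)"
  unfolding unit_steps_eq by simp

lemma card_unit_steps: "card (unit_steps :: (int^'d) set) = 2 * CARD('d)"
  unfolding unit_steps_eq by (subst card_image[OF inj_ustep]) (simp add: card_cartesian_product)

lemma unit_steps_nonempty: "(unit_steps :: (int^'d) set) \<noteq> {}"
  unfolding unit_steps_eq by simp

lemma unit_steps_neg: "u \<in> unit_steps \<Longrightarrow> - u \<in> unit_steps"
  by (simp add: unit_steps_def sqnorm_neg)

lemma step_seqs_Suc: "step_seqs (Suc n) = (\<lambda>(u,ys). u # ys) ` (unit_steps \<times> step_seqs n)"
  by (auto simp: step_seqs_def length_Suc_conv image_iff)

lemma finite_step_seqs: "finite (step_seqs n :: (int^'d) list set)"
  by (induction n) (auto simp: step_seqs_Suc finite_unit_steps, simp add: step_seqs_def)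

lemma walk_pos_0[simp]: "walk_pos xs 0 = 0"
  by (simp add: walk_pos_def)
lemma walk_pos_Cons_Suc[simp]: "walk_pos (u # ys) (Suc k) = u + walk_pos ys k"
  by (simp add: walk_pos_def)



lemma weight_sum:
  fixes h :: "int^'d \<Rightarrow> real"
  assumes pos: "\<And>x. h x > 0"
  shows "(\<Sum>xs\<in>step_seqs n. \<Prod>k<n. h (x0 + walk_pos xs (Suc k)) / (\<Sum>u\<in>unit_steps. h (x0 + walk_pos xs k + u))) = 1"
proof (induction n arbitrary: x0)
  case 0
  have "step_seqs 0 = {[] :: (int^'d) list}" by (auto simp: step_seqs_def)
  thus ?case by simp
next
  case (Suc n)
  define Q where "Q y = (\<Sum>u\<in>unit_steps. h (y + u))" for y
  have Qpos: "Q y > 0" for y unfolding Q_def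
    using finite_unit_steps unit_steps_nonempty pos by (intro sum_pos) auto
  have inj: "inj_on (\<lambda>(u,ys). u # ys) (unit_steps \<times> step_seqs n)"
    by (auto simp: inj_on_def)
  have termeq: "(\<Prod>k<Suc n. h (x0 + walk_pos (u#ys) (Suc k)) / Q (x0 + walk_pos (u#ys) k))
      = h (x0 + u) / Q x0 * (\<Prod>k<n. h ((x0 + u) + walk_pos ys (Suc k)) / Q ((x0 + u) + walk_pos ys k))" for u ys
    by (subst prod.lessThan_Suc_shift) (simp add: add.assoc)
  have "(\<Sum>xs\<in>step_seqs (Suc n). \<Prod>k<Suc n. h (x0 + walk_pos xs (Suc k)) / Q (x0 + walk_pos xs k))
      = (\<Sum>(u,ys)\<in>unit_steps \<times> step_seqs n. \<Prod>k<Suc n. h (x0 + walk_pos (u#ys) (Suc k)) / Q (x0 + walk_pos (u#ys) k))"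
    unfolding step_seqs_Suc by (subst sum.reindex[OF inj]) (simp add: case_prod_unfold)
  also have "\<dots> = (\<Sum>u\<in>unit_steps. \<Sum>ys\<in>step_seqs n. h (x0 + u) / Q x0 * (\<Prod>k<n. h ((x0 + u) + walk_pos ys (Suc k)) / Q ((x0 + u) + walk_pos ys k)))"
    unfolding termeq by (rule sum.cartesian_product[symmetric])
  also have "\<dots> = (\<Sum>u\<in>unit_steps. h (x0 + u) / Q x0)"
  proof (intro sum.cong refl)
    fix u
    have "(\<Sum>ys\<in>step_seqs n. h (x0 + u) / Q x0 * (\<Prod>k<n. h ((x0 + u) + walk_pos ys (Suc k)) / Q ((x0 + u) + walk_pos ys k)))
       = h (x0 + u) / Q x0 * (\<Sum>ys\<in>step_seqs n. (\<Prod>k<n. h ((x0 + u) + walk_pos ys (Suc k)) / Q ((x0 + u) + walk_pos ys k)))"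
      by (simp add: sum_distrib_left)
    also have "\<dots> = h (x0 + u) / Q x0" using Suc.IH[of "x0 + u"] by (simp add: Q_def)
    finally show "(\<Sum>ys\<in>step_seqs n. h (x0 + u) / Q x0 * (\<Prod>k<n. h ((x0 + u) + walk_pos ys (Suc k)) / Q ((x0 + u) + walk_pos ys k)))
       = h (x0 + u) / Q x0" .
  qed
  also have "\<dots> = 1" using Qpos[of x0] by (simp add: Q_def flip: sum_divide_distrib)
  finally show ?case by (simp add: Q_def add.assoc)
qed

lemma telescope:
  fixes a b :: "nat \<Rightarrow> real"
  assumes "\<And>k. a k \<noteq> 0" "\<And>k. b k \<noteq> 0"
  shows "(\<Prod>k<n. a (Suc k) / b k) = b n / a 0 * (\<Prod>k<Suc n. a k / b k)"
proof (induction n)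
  case 0 thus ?case using assms by simp
next
  case (Suc n)
  show ?case unfolding prod.lessThan_Suc Suc using assms[of n] assms[of "Suc n"]
    by (simp add: field_simps)
qed

lemma sum_group_card:
  fixes G :: "'b \<Rightarrow> real"
  assumes "finite I" "finite S" "f ` I \<subseteq> S"
  shows "(\<Sum>k\<in>I. G (f k)) = (\<Sum>x\<in>S. real (card {k\<in>I. f k = x}) * G x)"
proof -
  have "(\<Sum>k\<in>I. G (f k)) = (\<Sum>x\<in>S. \<Sum>k\<in>{k\<in>I. f k = x}. G (f k))"
    using sum.group[OF assms, of "\<lambda>k. G (f k)"] by simp
  also have "\<dots> = (\<Sum>x\<in>S. real (card {k\<in>I. f k = x}) * G x)"
    by (intro sum.cong refl) simp
  finally show ?thesis .
qed



lemma energy_sum: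
  fixes \<phi> :: "int^'d \<Rightarrow> real" and S :: "(int^'d) set"
  assumes finS: "finite S" and zero: "\<And>x. x \<notin> S \<Longrightarrow> \<phi> x = 0"
  shows "infsum (\<lambda>(y, z). (\<phi> y - \<phi> z)^2) {(y, z). adjacent y z}
    = 2 * real (card (unit_steps :: (int^'d) set)) * (\<Sum>x\<in>S. (\<phi> x)^2)
      - 2 * (\<Sum>x\<in>S. \<Sum>u\<in>unit_steps. \<phi> x * \<phi> (x + u))"
proof -
  let ?U = "unit_steps :: (int^'d) set"
  let ?f = "\<lambda>(y, z). (\<phi> y - \<phi> z)^2"
  define T where "T = S \<union> (\<lambda>(x,u). x - u) ` (S \<times> ?U)"
  have finT: "finite T" unfolding T_def using finS finite_unit_steps by auto
  have ST: "S \<subseteq> T" unfolding T_def by auto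
  define B where "B = (\<lambda>(y,u). (y, y + u)) ` (T \<times> ?U)"
  have injB: "inj_on (\<lambda>(y,u). (y, y + u)) (T \<times> ?U)" by (auto simp: inj_on_def)
  have adj_iff: "adjacent y z \<longleftrightarrow> z - y \<in> ?U" for y z :: "int^'d"
  proof -
    have "sqnorm (y - z) = sqnorm (z - y)" using sqnorm_neg[of "z - y"] by simp
    thus ?thesis by (simp add: adjacent_def unit_steps_def)
  qed
  have BA: "B \<subseteq> {(y, z). adjacent y z}" unfolding B_def by (auto simp: adj_iff)
  have "infsum ?f {(y, z). adjacent y z} = infsum ?f B"
  proof (rule infsum_cong_neutral)
    fix p assume p: "p \<in> {(y, z). adjacent y z} - B"
    then obtain y z where pyz: "p = (y, z)" and a: "z - y \<in> ?U" and nB: "(y,z) \<notin> B"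
      by (auto simp: adj_iff)
    have yT: "y \<notin> T"
    proof
      assume "y \<in> T"
      hence "(y, y + (z - y)) \<in> B" unfolding B_def using a by (auto intro!: image_eqI[where x="(y, z - y)"])
      with nB show False by simp
    qed
    hence "y \<notin> S" using ST by auto
    moreover have "z \<notin> S"
    proof
      assume "z \<in> S"
      hence "z - (z - y) \<in> T" unfolding T_def using a by blast
      with yT show False by simp
    qed
    ultimately show "?f p = 0" using zero pyz by simp
  qed (use BA in auto)
  also have "\<dots> = sum ?f B" using finT finite_unit_steps unfolding B_def by (intro infsum_finite) auto
  also have "\<dots> = (\<Sum>(y,u)\<in>T \<times> ?U. (\<phi> y - \<phi> (y + u))^2)"
    unfolding B_def by (subst sum.reindex[OF injB]) (simp add: case_prod_unfold)
  also have "\<dots> = (\<Sum>u\<in>?U. \<Sum>y\<in>T. (\<phi> y)^2 + (\<phi> (y + u))^2 - 2 * (\<phi> y * \<phi> (y + u)))"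
    by (subst sum.cartesian_product[symmetric], subst sum.swap) (simp add: power2_diff algebra_simps)
  also have "\<dots> = (\<Sum>u\<in>?U. (\<Sum>x\<in>S. (\<phi> x)^2) + (\<Sum>x\<in>S. (\<phi> x)^2) - 2 * (\<Sum>x\<in>S. \<phi> x * \<phi> (x + u)))"
  proof (intro sum.cong refl)
    fix u assume u: "u \<in> ?U"
    have a1: "(\<Sum>y\<in>T. (\<phi> y)^2) = (\<Sum>x\<in>S. (\<phi> x)^2)"
      by (rule sum.mono_neutral_right[OF finT ST]) (use zero in auto)
    have a3: "(\<Sum>y\<in>T. \<phi> y * \<phi> (y + u)) = (\<Sum>x\<in>S. \<phi> x * \<phi> (x + u))"
      by (rule sum.mono_neutral_right[OF finT ST]) (use zero in auto)
    have sub: "(\<lambda>x. x - u) ` S \<subseteq> T" unfolding T_def using u by blast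
    have "(\<Sum>y\<in>T. (\<phi> (y + u))^2) = (\<Sum>y\<in>(\<lambda>x. x - u) ` S. (\<phi> (y + u))^2)"
    proof (rule sum.mono_neutral_right[OF finT sub], clarify)
      fix y assume "y \<in> T" "y \<notin> (\<lambda>x. x - u) ` S"
      hence "y + u \<notin> S" by (metis add_diff_cancel image_eqI)
      thus "(\<phi> (y + u))^2 = 0" using zero by simp
    qed
    also have "\<dots> = (\<Sum>x\<in>S. (\<phi> x)^2)"
      by (subst sum.reindex) (auto simp: inj_on_def)
    finally have a2: "(\<Sum>y\<in>T. (\<phi> (y + u))^2) = (\<Sum>x\<in>S. (\<phi> x)^2)" .
    show "(\<Sum>y\<in>T. (\<phi> y)^2 + (\<phi> (y + u))^2 - 2 * (\<phi> y * \<phi> (y + u)))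
        = (\<Sum>x\<in>S. (\<phi> x)^2) + (\<Sum>x\<in>S. (\<phi> x)^2) - 2 * (\<Sum>x\<in>S. \<phi> x * \<phi> (x + u))"
      by (simp add: sum.distrib sum_subtractf a1 a2 a3 flip: sum_distrib_left)
  qed
  also have "\<dots> = 2 * real (card ?U) * (\<Sum>x\<in>S. (\<phi> x)^2) - 2 * (\<Sum>u\<in>?U. \<Sum>x\<in>S. \<phi> x * \<phi> (x + u))"
    by (simp add: sum_subtractf sum.distrib flip: sum_distrib_left)
  also have "\<dots> = 2 * real (card ?U) * (\<Sum>x\<in>S. (\<phi> x)^2) - 2 * (\<Sum>x\<in>S. \<Sum>u\<in>?U. \<phi> x * \<phi> (x + u))"
    by (subst sum.swap) simp
  finally show ?thesis .
qed



lemma exp_neg_le_inv: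
  fixes t :: real assumes "t > 0" shows "exp (- (t - 1)) \<le> 1 / t"
proof -
  have "t \<le> exp (t - 1)" using exp_ge_add_one_self[of "t - 1"] by simp
  hence "1 / exp (t - 1) \<le> 1 / t" using assms by (intro divide_left_mono) auto
  moreover have "exp (- (t - 1)) = 1 / exp (t - 1)" using exp_minus[of "t - 1"] by (simp add: inverse_eq_divide)
  ultimately show ?thesis by simp
qed

theorem proposition3p2:
  fixes \<phi> :: "int ^ 'd \<Rightarrow> real" and N :: nat and \<alpha> :: real
  assumes nonneg: "\<And>y. \<phi> y \<ge> 0"
    and mass: "((\<lambda>y. (\<phi> y)^2) has_sum real N) UNIV"
    and N: "N \<ge> 1"
    and \<alpha>: "0 < \<alpha>" "\<alpha> < 1"
  shows "prob_fN_eq N \<phi> \<le>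
     \<phi> 0 / \<alpha> * exp (- (1/2) * dirichlet_energy \<phi>
                       + \<alpha> * sqrt (real N * real (card (supp \<phi>))))"
proof -
  let ?U = "unit_steps :: (int^'d) set"
  let ?R = "\<phi> 0 / \<alpha> * exp (- (1/2) * dirichlet_energy \<phi> + \<alpha> * sqrt (real N * real (card (supp \<phi>))))"
  define K where "K = real (card ?U)"
  have Kpos: "K > 0" unfolding K_def using finite_unit_steps unit_steps_nonempty
    by (simp add: card_gt_0_iff)
  have K_eq: "K = 2 * real CARD('d)" unfolding K_def card_unit_steps by simp
  define h where "h x = max (\<phi> x) \<alpha>" for x
  have hpos: "h x > 0" for x unfolding h_def using \<alpha> by simp
  have h_le: "h x \<le> \<phi> x + \<alpha>" for x unfolding h_def using nonneg[of x] \<alpha> by simp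
  define Ph where "Ph y = (\<Sum>u\<in>?U. h (y + u)) / K" for y
  have Ph_ge: "Ph y \<ge> \<alpha>" for y
  proof -
    have "(\<Sum>u\<in>?U. \<alpha>) \<le> (\<Sum>u\<in>?U. h (y + u))" by (intro sum_mono) (simp add: h_def)
    hence "K * \<alpha> \<le> (\<Sum>u\<in>?U. h (y + u))" by (simp add: K_def)
    thus ?thesis unfolding Ph_def using Kpos by (simp add: field_simps)
  qed
  have Ph_pos: "Ph y > 0" for y using Ph_ge[of y] \<alpha> by simp
  define n where "n = N - 1"
  have Nn: "N = Suc n" using N unfolding n_def by simp
  define A where "A = {xs \<in> step_seqs n. \<forall>x. sqrt (real (local_time N xs x)) = \<phi> x}"
  have prob: "prob_fN_eq N \<phi> = real (card A) / K ^ n"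
    unfolding prob_fN_eq_def A_def K_def n_def by simp
  have Rnn: "?R \<ge> 0" using nonneg[of 0] \<alpha> by simp
  show ?thesis
  proof (cases "A = {}")
    case True
    thus ?thesis using Rnn by (simp add: prob)
  next
    case False
    then obtain xs0 where xs0: "xs0 \<in> A" by blast
    have lt: "real (local_time N xs x) = (\<phi> x)^2" if "xs \<in> A" for xs x
    proof -
      have "sqrt (real (local_time N xs x)) = \<phi> x" using that by (simp add: A_def)
      thus ?thesis by (metis of_nat_0_le_iff real_sqrt_pow2)
    qed
    have fin_lt: "finite {k. k < N \<and> walk_pos xs k = x}" for xs and x :: "int^'d" by simp
    have lt_pos: "local_time N xs (walk_pos xs k) \<ge> 1" if "k < N" for xs k
    proof -
      have "k \<in> {j. j < N \<and> walk_pos xs j = walk_pos xs k}" using that by simp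
      hence "card {j. j < N \<and> walk_pos xs j = walk_pos xs k} \<noteq> 0" using fin_lt by auto
      thus ?thesis unfolding local_time_def by linarith
    qed
    define S where "S = supp \<phi>"
    have zero: "x \<notin> S \<Longrightarrow> \<phi> x = 0" for x by (simp add: S_def supp_def)
    have S_ge1: "\<phi> x \<ge> 1" if "x \<in> S" for x
    proof -
      have "\<phi> x \<noteq> 0" using that by (simp add: S_def supp_def)
      hence "real (local_time N xs0 x) \<noteq> 0" using lt[OF xs0, of x] by simp
      hence "local_time N xs0 x \<ge> 1" by simp
      hence "real (local_time N xs0 x) \<ge> 1" by simp
      hence g: "(\<phi> x)^2 \<ge> 1" using lt[OF xs0, of x] by simp
      show ?thesis
      proof (rule ccontr)
        assume "\<not> ?thesis"
        hence "(\<phi> x)^2 < 1^2" using power_strict_mono[of "\<phi> x" 1 2] nonneg[of x] by simp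
        with g show False by simp
      qed
    qed
    have walkS: "walk_pos xs k \<in> S" if "xs \<in> A" "k < N" for xs k
    proof -
      have "real (local_time N xs (walk_pos xs k)) \<ge> 1" using lt_pos[OF that(2)] by simp
      hence "\<phi> (walk_pos xs k) \<noteq> 0" using lt[OF that(1)] by auto
      thus ?thesis by (simp add: S_def supp_def)
    qed
    have S_sub: "S \<subseteq> walk_pos xs0 ` {..<N}"
    proof
      fix x assume "x \<in> S"
      hence "\<phi> x \<noteq> 0" by (simp add: S_def supp_def)
      hence "real (local_time N xs0 x) \<noteq> 0" using lt[OF xs0, of x] by simp
      hence "local_time N xs0 x \<noteq> 0" by simp
      hence "{k. k < N \<and> walk_pos xs0 k = x} \<noteq> {}" unfolding local_time_def by (metis card.empty)
      thus "x \<in> walk_pos xs0 ` {..<N}" by auto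
    qed
    have finS: "finite S" using S_sub finite_surj by blast
    have hS: "h x = \<phi> x" if "x \<in> S" for x using S_ge1[OF that] \<alpha> by (simp add: h_def)
    have mass_S: "(\<Sum>x\<in>S. (\<phi> x)^2) = real N"
    proof -
      have "((\<lambda>y. (\<phi> y)^2) has_sum (\<Sum>x\<in>S. (\<phi> x)^2)) UNIV"
        by (rule has_sum_finite_neutralI[OF finS]) (use zero in auto)
      thus ?thesis using mass has_sum_unique by blast
    qed
    have zS: "0 \<in> S" using walkS[OF xs0, of 0] Nn by simp
    have phi0: "\<phi> 0 \<ge> 1" using S_ge1[OF zS] .
    define X where "X = (\<Sum>x\<in>S. \<phi> x * Ph x) - real N"
    define W where "W xs = (\<Prod>k<n. h (0 + walk_pos xs (Suc k)) / (\<Sum>u\<in>?U. h (0 + walk_pos xs k + u)))" for xs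
    have Wsum: "(\<Sum>xs\<in>step_seqs n. W xs) = 1" unfolding W_def by (rule weight_sum[OF hpos])
    have Wnn: "W xs \<ge> 0" for xs unfolding W_def
      using hpos by (intro prod_nonneg divide_nonneg_nonneg sum_nonneg) (auto intro: less_imp_le)
    define c where "c = \<alpha> / \<phi> 0 * exp (- X) / K ^ n"
    have Wlow: "c \<le> W xs" if xsA: "xs \<in> A" for xs
    proof -
      define P where "P k = walk_pos xs k" for k
      have "W xs = (\<Prod>k<n. (h (P (Suc k)) / Ph (P k)) / K)"
        unfolding W_def P_def Ph_def using Kpos by (intro prod.cong refl) (simp add: field_simps)
      also have "\<dots> = (\<Prod>k<n. h (P (Suc k)) / Ph (P k)) / K ^ n"
        by (subst prod_dividef) simp
      also have "(\<Prod>k<n. h (P (Suc k)) / Ph (P k)) = Ph (P n) / h (P 0) * (\<Prod>k<Suc n. h (P k) / Ph (P k))"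
        by (rule telescope) (use hpos Ph_pos in \<open>metis less_irrefl\<close>)+
      finally have Weq: "W xs = Ph (P n) / \<phi> 0 * (\<Prod>k<N. h (P k) / Ph (P k)) / K ^ n"
        using hS[OF zS] by (simp add: P_def Nn)
      have "(\<Prod>k<N. exp (- (Ph (P k) / h (P k) - 1))) \<le> (\<Prod>k<N. h (P k) / Ph (P k))"
      proof (rule prod_mono, rule conjI)
        fix k
        show "0 \<le> exp (- (Ph (P k) / h (P k) - 1))" by simp
        have "exp (- (Ph (P k) / h (P k) - 1)) \<le> 1 / (Ph (P k) / h (P k))"
          using hpos Ph_pos by (intro exp_neg_le_inv) (auto intro: divide_pos_pos)
        thus "exp (- (Ph (P k) / h (P k) - 1)) \<le> h (P k) / Ph (P k)" by simp
      qed
      also have "(\<Prod>k<N. exp (- (Ph (P k) / h (P k) - 1))) = exp (- (\<Sum>k<N. (Ph (P k) / h (P k) - 1)))"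
        by (simp only: exp_sum[OF finite_lessThan] sum_negf[symmetric])
      also have "(\<Sum>k<N. (Ph (P k) / h (P k) - 1)) = (\<Sum>x\<in>S. real (card {k\<in>{..<N}. P k = x}) * (Ph x / h x - 1))"
        by (rule sum_group_card[where G = "\<lambda>x. Ph x / h x - 1"]) (use finS walkS[OF xsA] in \<open>auto simp: P_def\<close>)
      also have "\<dots> = (\<Sum>x\<in>S. \<phi> x * Ph x - (\<phi> x)^2)"
      proof (intro sum.cong refl)
        fix x assume xS: "x \<in> S"
        have "real (card {k\<in>{..<N}. P k = x}) = (\<phi> x)^2"
          using lt[OF xsA, of x] by (simp add: local_time_def P_def)
        thus "real (card {k\<in>{..<N}. P k = x}) * (Ph x / h x - 1) = \<phi> x * Ph x - (\<phi> x)^2"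
          using hS[OF xS] S_ge1[OF xS] by (simp add: power2_eq_square field_simps)
      qed
      also have "\<dots> = X" by (simp add: X_def sum_subtractf mass_S)
      finally have prodlow: "exp (- X) \<le> (\<Prod>k<N. h (P k) / Ph (P k))" .
      have "\<alpha> / \<phi> 0 * exp (- X) \<le> Ph (P n) / \<phi> 0 * (\<Prod>k<N. h (P k) / Ph (P k))"
        using Ph_ge[of "P n"] phi0 prodlow \<alpha>
        by (intro mult_mono divide_right_mono) auto
      thus ?thesis unfolding Weq c_def using Kpos by (intro divide_right_mono) auto
    qed
    have "real (card A) * c = (\<Sum>xs\<in>A. c)" by simp
    also have "\<dots> \<le> (\<Sum>xs\<in>A. W xs)" by (rule sum_mono) (rule Wlow)
    also have "\<dots> \<le> (\<Sum>xs\<in>step_seqs n. W xs)"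
      by (rule sum_mono2[OF finite_step_seqs]) (auto simp: A_def Wnn)
    finally have cA: "real (card A) * c \<le> 1" using Wsum by simp
    have probX: "prob_fN_eq N \<phi> \<le> \<phi> 0 / \<alpha> * exp X"
    proof -
      have eq: "real (card A) / K ^ n = (real (card A) * c) * (\<phi> 0 / \<alpha> * exp X)"
        unfolding c_def using Kpos phi0 \<alpha> by (simp add: field_simps exp_minus)
      have "(real (card A) * c) * (\<phi> 0 / \<alpha> * exp X) \<le> 1 * (\<phi> 0 / \<alpha> * exp X)"
        using cA phi0 \<alpha> by (intro mult_right_mono) auto
      thus ?thesis using eq prob by simp
    qed
    define C where "C = (\<Sum>x\<in>S. \<Sum>u\<in>?U. \<phi> x * \<phi> (x + u))"
    have Xle: "X \<le> C / K - real N + \<alpha> * (\<Sum>x\<in>S. \<phi> x)"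
    proof -
      have "\<phi> x * Ph x \<le> \<phi> x * ((\<Sum>u\<in>?U. \<phi> (x + u)) / K + \<alpha>)" for x
      proof -
        have "(\<Sum>u\<in>?U. h (x + u)) \<le> (\<Sum>u\<in>?U. \<phi> (x + u) + \<alpha>)" by (intro sum_mono h_le)
        also have "\<dots> = (\<Sum>u\<in>?U. \<phi> (x + u)) + K * \<alpha>" by (simp add: sum.distrib K_def)
        finally have "Ph x \<le> (\<Sum>u\<in>?U. \<phi> (x + u)) / K + \<alpha>"
          unfolding Ph_def using Kpos by (simp add: field_simps)
        thus ?thesis using nonneg[of x] by (rule mult_left_mono)
      qed
      hence "(\<Sum>x\<in>S. \<phi> x * Ph x) \<le> (\<Sum>x\<in>S. \<phi> x * ((\<Sum>u\<in>?U. \<phi> (x + u)) / K + \<alpha>))"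
        by (intro sum_mono)
      also have "\<dots> = C / K + \<alpha> * (\<Sum>x\<in>S. \<phi> x)"
        by (simp add: C_def algebra_simps sum.distrib sum_distrib_left sum_divide_distrib)
      finally show ?thesis by (simp add: X_def)
    qed
    have CS: "(\<Sum>x\<in>S. \<phi> x) \<le> sqrt (real N * real (card S))"
    proof (rule real_le_rsqrt)
      show "(\<Sum>x\<in>S. \<phi> x)^2 \<le> real N * real (card S)"
        using sum_squared_le_sum_of_squares[of \<phi> S] mass_S by simp
    qed
    have Isum: "infsum (\<lambda>(y, z). (\<phi> y - \<phi> z)^2) {(y, z). adjacent y z} = 2 * K * real N - 2 * C"
      using energy_sum[OF finS zero] mass_S by (simp add: C_def K_def)
    have E: "dirichlet_energy \<phi> = (2 * K * real N - 2 * C) / K"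
      unfolding dirichlet_energy_def Isum K_eq by simp
    have "X \<le> - (1/2) * dirichlet_energy \<phi> + \<alpha> * sqrt (real N * real (card (supp \<phi>)))"
    proof -
      have "- (1/2) * dirichlet_energy \<phi> = C / K - real N" unfolding E using Kpos by (simp add: field_simps)
      moreover have "\<alpha> * (\<Sum>x\<in>S. \<phi> x) \<le> \<alpha> * sqrt (real N * real (card (supp \<phi>)))"
        using CS \<alpha> by (simp add: S_def)
      ultimately show ?thesis using Xle by linarith
    qed
    hence "\<phi> 0 / \<alpha> * exp X \<le> ?R" using phi0 \<alpha> by (intro mult_left_mono) auto
    thus ?thesis using probX by linarith
  qed
qed

end
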